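(* Let ${\bf a}=(a_1,\ldots,a_r)$ be a tuple of positive integers with $r\geq 2$. Then \[\deg({\bf B}:\mathcal W_{\bf a}\to\mathcal W_{\bf a})=\prod_{j=1}^{r-1}\left(\frac{2a_j}{a_{j+1}+a_{j+2}+\cdots+a_r+1}+1\right).\]
   Context: For finite sets $X,Y$ and $f:X\to Y$, $\deg(f)=\frac{1}{|X|}\sum_{y\in Y}|f^{-1}(y)|^2$. $\mathcal W_{\bf a}$ is the set of all words over the alphabet $\{1,\dots,r\}$ containing exactly $a_i$ copies of the letter $i$ for each $i$. For a word $w=w_1\cdots w_\ell$ and $i\in\{1,\dots,\ell-1\}$, $t_i(w)$ is obtained by swapping $w_i$ and $w_{i+1}$ if $w_i>w_{i+1}$, and $t_i(w)=w$ if $w_i\leq w_{i+1}$. Bubble sort is ${\bf B}(w)=t_{\ell-1}\circ t_{\ell-2}\circ\cdots\circ t_1(w)$, viewed as a map $\mathcal W_{\bf a}\to\mathcal W_{\bf a}$. *)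

theory Defs
  imports Complex_Main
begin

definition fdeg :: "'a set \<Rightarrow> 'b set \<Rightarrow> ('a \<Rightarrow> 'b) \<Rightarrow> real" where
  "fdeg X Y f = (1 / real (card X)) * (\<Sum>y\<in>Y. real (card {x\<in>X. f x = y}) ^ 2)"

(* W_a: words over {1..r} (r = length a) with exactly a_i copies of letter i.
   a_i is  a ! (i - 1)  (lists are 0-indexed). *)
definition words :: "nat list \<Rightarrow> nat list set" where
  "words a = {w. set w \<subseteq> {1..length a} \<and>
                 (\<forall>i\<in>{1..length a}. count_list w i = a ! (i - 1))}"

(* t_i with 1-based position i: swap w_i and w_{i+1} if w_i > w_{i+1} *)
definition tswap :: "nat \<Rightarrow> nat list \<Rightarrow> nat list" where
  "tswap i w = (if w ! (i - 1) > w ! i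
                then w[i - 1 := w ! i, i := w ! (i - 1)] else w)"

definition bubble :: "nat list \<Rightarrow> nat list" where
  "bubble w = fold tswap [1..<length w] w"

end

theory Submission
  imports Defs "HOL-Library.Multiset"
begin


fun bub :: "'a::linorder list \<Rightarrow> 'a list" where
  "bub [] = []"
| "bub [x] = [x]"
| "bub (x # y # r) = (if y < x then y # bub (x # r) else x # bub (y # r))"

lemma tswap_Suc: "i \<ge> 1 \<Longrightarrow> tswap (Suc i) (z # v) = z # tswap i v"
  by (cases i) (auto simp: tswap_def)

lemma fold_tswap_Suc:
  "\<forall>i\<in>set xs. i \<ge> 1 \<Longrightarrow> fold tswap (map Suc xs) (z # v) = z # fold tswap xs v"
  by (induction xs arbitrary: v) (auto simp: tswap_Suc)

lemma bubble_bub: "bubble w = bub w"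
proof (induction w rule: bub.induct)
  case 1
  then show ?case by (simp add: bubble_def)
next
  case (2 x)
  then show ?case by (simp add: bubble_def)
next
  case (3 x y r)
  have u: "[1..<length (x # y # r)] = 1 # map Suc [1..<length (y # r)]"
  proof -
    have "[1..<Suc (Suc (length r))] = 1 # [Suc 1..<Suc (Suc (length r))]"
      by (rule upt_conv_Cons) simp
    then show ?thesis by (simp only: length_Cons map_Suc_upt)
  qed
  have t1: "tswap 1 (x # y # r) = (if y < x then y # x # r else x # y # r)"
    by (auto simp: tswap_def)
  show ?case
  proof (cases "y < x")
    case True
    have "bubble (x # y # r) = fold tswap (map Suc [1..<length (x # r)]) (y # x # r)"
      unfolding bubble_def u using True t1 by simp
    also have "\<dots> = y # bubble (x # r)"
      by (subst fold_tswap_Suc) (auto simp: bubble_def)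
    finally show ?thesis using True 3 by simp
  next
    case False
    have "bubble (x # y # r) = fold tswap (map Suc [1..<length (y # r)]) (x # y # r)"
      unfolding bubble_def u using False t1 by simp
    also have "\<dots> = x # bubble (y # r)"
      by (subst fold_tswap_Suc) (auto simp: bubble_def)
    finally show ?thesis using False 3 by simp
  qed
qed

lemma mset_bub [simp]: "mset (bub w) = mset w"
  by (induction w rule: bub.induct) auto

lemma length_bub [simp]: "length (bub w) = length w"
  by (metis mset_bub size_mset)

lemma bub_map:
  fixes g :: "'a::linorder \<Rightarrow> 'b::linorder"
  assumes "mono g"
  shows "bub (map g w) = map g (bub w)"
proof (induction w rule: bub.induct)
  case (3 x y r)
  show ?case
  proof (cases "y < x")
    case True
    then have "g y \<le> g x" using assms by (simp add: monoD)
    then show ?thesis using True 3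
      by (cases "g y < g x") (auto)
  next
    case False
    then have "g x \<le> g y" using assms by (simp add: monoD)
    then show ?thesis using False 3 by auto
  qed
qed auto

lemma bub_filter:
  assumes up: "\<And>x y. P x \<Longrightarrow> x \<le> y \<Longrightarrow> P y"
  shows "bub (filter P w) = filter P (bub w)"
proof (induction w rule: bub.induct)
  case (3 x y r)
  show ?case
  proof (cases "y < x")
    case True
    then have IH: "bub (filter P (x # r)) = filter P (bub (x # r))" using 3 by simp
    show ?thesis
    proof (cases "P y")
      case True
      then have "P x" using up \<open>y < x\<close> by (meson less_imp_le)
      then show ?thesis using \<open>y < x\<close> True IH by simp
    next
      case False
      then show ?thesis using \<open>y < x\<close> IH by auto
    qed
  next
    case False
    then have IH: "bub (filter P (y # r)) = filter P (bub (y # r))" using 3 by simp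
    show ?thesis
    proof (cases "P x")
      case True
      then have "P y" using up False by (meson not_less)
      then show ?thesis using False True IH by simp
    next
      case nx: False
      then show ?thesis using False IH by auto
    qed
  qed
qed auto

lemma bub_False: "bub (False # v) = False # bub v"
  by (cases v) auto

lemma bub_True: "bub (True # v) = v @ [True]"
  by (induction v) (auto simp: bub_False)

lemma last_bub_True: "True \<in> set v \<Longrightarrow> last (bub v) = True"
proof (induction v)
  case (Cons b v)
  show ?case
  proof (cases b)
    case True then show ?thesis by (simp add: bub_True)
  next
    case False
    then have "True \<in> set v" using Cons by auto
    then have "v \<noteq> []" by auto
    then have "bub v \<noteq> []" by (metis length_bub length_0_conv)
    then show ?thesis using False Cons \<open>True \<in> set v\<close> by (simp add: bub_False)
  qed
qed simp



fun M :: "nat list \<Rightarrow> nat multiset" where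
  "M [] = {#}"
| "M (s # a) = replicate_mset s 1 + image_mset Suc (M a)"

definition W :: "nat list \<Rightarrow> nat list set" where
  "W a = {w. mset w = M a}"

lemma cnt_Suc0: "count (image_mset Suc A) 0 = 0"
  by (induction A) auto

lemma cnt_SucS: "count (image_mset Suc A) (Suc y) = count A y"
  by (induction A) auto

lemma count_M: "count (M a) x = (if 1 \<le> x \<and> x \<le> length a then a ! (x - 1) else 0)"
proof (induction a arbitrary: x)
  case Nil
  then show ?case by simp
next
  case (Cons s a)
  show ?case
  proof (cases x)
    case 0
    then show ?thesis by (simp add: cnt_Suc0)
  next
    case (Suc y)
    then show ?thesis using Cons[of y]
      by (cases y) (auto simp: cnt_SucS)
  qed
qed

lemma words_W: "words a = W a"
proof (intro set_eqI iffI)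
  fix w assume w: "w \<in> words a"
  have "count (mset w) x = count (M a) x" for x
  proof (cases "1 \<le> x \<and> x \<le> length a")
    case True
    then show ?thesis using w by (simp add: words_def count_mset count_M)
  next
    case False
    then have "x \<notin> set w" using w by (auto simp: words_def)
    then show ?thesis using False by (auto simp add: count_M)
  qed
  then show "w \<in> W a" by (simp add: W_def multiset_eq_iff)
next
  fix w assume w: "w \<in> W a"
  then have c: "count_list w x = count (M a) x" for x
    by (simp add: W_def flip: count_mset)
  have "set w \<subseteq> {1..length a}"
  proof
    fix x assume "x \<in> set w"
    then have "count_list w x \<noteq> 0" by (metis count_mset count_mset_0_iff)
    then show "x \<in> {1..length a}" using c[of x] by (auto simp: count_M split: if_splits)
  qed
  then show "w \<in> words a" using c by (auto simp: words_def count_M)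
qed

lemma zero_notin_M: "0 \<notin># M a"
  by (metis count_M count_eq_zero_iff not_one_le_zero)

lemma size_M: "size (M a) = sum_list a"
  by (induction a) auto

lemma W_single: "W [s] = {replicate s 1}"
proof (intro set_eqI iffI)
  fix w assume "w \<in> W [s]"
  then have m: "mset w = replicate_mset s 1" by (simp add: W_def)
  then have "length w = s" by (metis size_mset size_replicate_mset)
  moreover have "y \<in> set w \<Longrightarrow> y = 1" for y
    using m by (metis in_replicate_mset set_mset_mset)
  ultimately show "w \<in> {replicate s 1}" by (simp add: replicate_eqI)
qed (simp add: W_def)

fun merge :: "bool list \<Rightarrow> nat list \<Rightarrow> nat list" where
  "merge [] u = []"
| "merge (False # m) u = 1 # merge m u"
| "merge (True # m) u = Suc (hd u) # merge m (tl u)"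

definition Phi :: "nat list \<Rightarrow> bool list \<times> nat list" where
  "Phi w = (map (\<lambda>x. 1 < x) w, map (\<lambda>x. x - 1) (filter (\<lambda>x. 1 < x) w))"

lemma merge_Phi: "0 \<notin> set w \<Longrightarrow> merge (fst (Phi w)) (snd (Phi w)) = w"
proof (induction w)
  case (Cons x w)
  then show ?case by (cases "1 < x") (auto simp: Phi_def)
qed (simp add: Phi_def)

lemma Phi_merge: "count_list m True = length u \<Longrightarrow> 0 \<notin> set u \<Longrightarrow> Phi (merge m u) = (m, u)"
proof (induction m arbitrary: u)
  case Nil
  then show ?case by (simp add: Phi_def)
next
  case (Cons b m)
  show ?case
  proof (cases b)
    case True
    then obtain y u' where u: "u = y # u'" using Cons.prems by (cases u) auto
    then have "Phi (merge m u') = (m, u')" using Cons True by simp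
    moreover have "0 < y" using u Cons.prems by (metis gr0I list.set_intros(1))
    ultimately show ?thesis using True u by (simp add: Phi_def)
  next
    case False
    then have "Phi (merge m u) = (m, u)" using Cons by simp
    then show ?thesis using False by (simp add: Phi_def)
  qed
qed

lemma mset_merge: "count_list m True = length u \<Longrightarrow>
  mset (merge m u) = replicate_mset (count_list m False) 1 + image_mset Suc (mset u)"
proof (induction m arbitrary: u)
  case Nil
  then show ?case by simp
next
  case (Cons b m)
  show ?case
  proof (cases b)
    case True
    then obtain y u' where u: "u = y # u'" using Cons.prems by (cases u) auto
    then show ?thesis using Cons True by simp
  next
    case False
    then show ?thesis using Cons by simp
  qed
qed

definition bl :: "nat \<Rightarrow> nat \<Rightarrow> bool list set" where
  "bl s m = {x. count_list x False = s \<and> count_list x True = m}"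

lemma image_mset_const: "(\<forall>x\<in>#A. f x = c) \<Longrightarrow> image_mset f A = replicate_mset (size A) c"
  by (induction A) auto

lemma img_true: "0 \<notin># A \<Longrightarrow> image_mset (\<lambda>x. 1 < x) (image_mset Suc A) = replicate_mset (size A) True"
  by (induction A) auto

lemma filter_rep1: "filter_mset (\<lambda>x. 1 < x) (replicate_mset s (1::nat)) = {#}"
  by (induction s) auto

lemma filter_Suc: "0 \<notin># A \<Longrightarrow> filter_mset (\<lambda>x. 1 < x) (image_mset Suc A) = image_mset Suc A"
  by (induction A) auto

lemma pred_Suc: "image_mset (\<lambda>x. x - 1) (image_mset Suc A) = A"
  by (induction A) auto

lemma count_list_bool_length: "count_list x False + count_list x True = length (x :: bool list)"
  by (induction x) auto

lemma Phi_mem: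
  assumes "w \<in> W (s # a)"
  shows "Phi w \<in> bl s (sum_list a) \<times> W a"
proof -
  have m: "mset w = replicate_mset s 1 + image_mset Suc (M a)" using assms by (simp add: W_def)
  have z: "\<forall>x\<in>#M a. 0 < x" using zero_notin_M[of a] by (metis gr0I)
  have "mset (fst (Phi w)) = replicate_mset s False + replicate_mset (sum_list a) True"
  proof -
    have i: "image_mset (\<lambda>x. 1 < x) (image_mset Suc (M a)) = replicate_mset (sum_list a) True"
      using img_true[OF zero_notin_M[of a]] size_M[of a] by simp
    show ?thesis using m i by (simp add: Phi_def)
  qed
  then have 1: "fst (Phi w) \<in> bl s (sum_list a)"
    by (simp add: bl_def flip: count_mset)
  have "mset (snd (Phi w)) = M a"
  proof -
    have f1: "filter_mset (\<lambda>x. 1 < x) (replicate_mset s (1::nat)) = {#}" by (rule filter_rep1)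
    have f2: "filter_mset (\<lambda>x. 1 < x) (image_mset Suc (M a)) = image_mset Suc (M a)"
      by (rule filter_Suc[OF zero_notin_M])
    have f3: "image_mset (\<lambda>x. x - 1) (image_mset Suc (M a)) = M a" by (rule pred_Suc)
    have "mset (snd (Phi w)) = image_mset (\<lambda>x. x - 1) (filter_mset (\<lambda>x. 1 < x) (mset w))"
      by (simp add: Phi_def)
    also have "\<dots> = M a" unfolding m filter_union_mset f1 f2 by (simp only: f3 add_0 image_mset_empty)
    finally show ?thesis .
  qed
  then have 2: "snd (Phi w) \<in> W a" by (simp add: W_def)
  show ?thesis using 1 2 by (simp add: mem_Times_iff)
qed

lemma bij_Phi: "bij_betw Phi (W (s # a)) (bl s (sum_list a) \<times> W a)"
proof (rule bij_betw_imageI)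
  show "inj_on Phi (W (s # a))"
  proof (rule inj_onI)
    fix w w' assume "w \<in> W (s # a)" "w' \<in> W (s # a)" "Phi w = Phi w'"
    moreover have "0 \<notin> set w" "0 \<notin> set w'"
      using calculation zero_notin_M[of "s # a"] unfolding W_def by (metis mem_Collect_eq set_mset_mset)+
    ultimately show "w = w'" by (metis merge_Phi)
  qed
  show "Phi ` W (s # a) = bl s (sum_list a) \<times> W a"
  proof
    show "Phi ` W (s # a) \<subseteq> bl s (sum_list a) \<times> W a" using Phi_mem by blast
  next
    show "bl s (sum_list a) \<times> W a \<subseteq> Phi ` W (s # a)"
    proof (clarify)
      fix m u assume m: "m \<in> bl s (sum_list a)" and u: "u \<in> W a"
      have len: "count_list m True = length u" using m u
        by (simp add: bl_def W_def size_M flip: size_mset)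
      have "merge m u \<in> W (s # a)"
        using mset_merge[OF len] m u by (simp add: W_def bl_def)
      moreover have "0 \<notin> set u" using u zero_notin_M[of a] unfolding W_def by (metis mem_Collect_eq set_mset_mset)
    then have "Phi (merge m u) = (m, u)" using Phi_merge[OF len] by blast
      ultimately show "(m, u) \<in> Phi ` W (s # a)" by force
    qed
  qed
qed

lemma Phi_bub: "Phi (bub w) = (bub (fst (Phi w)), bub (snd (Phi w)))"
proof -
  have m1: "mono (\<lambda>x::nat. 1 < x)" by (auto simp: mono_def)
  have m2: "mono (\<lambda>x::nat. x - 1)" by (auto simp: mono_def)
  have f: "bub (filter (\<lambda>x::nat. 1 < x) w) = filter (\<lambda>x. 1 < x) (bub w)"
    by (rule bub_filter) simp
  have e1: "bub (map (\<lambda>x::nat. 1 < x) v) = map (\<lambda>x. 1 < x) (bub v)" for v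
    by (rule bub_map[OF m1])
  have e2: "bub (map (\<lambda>x::nat. x - 1) v) = map (\<lambda>x. x - 1) (bub v)" for v
    by (rule bub_map[OF m2])
  show ?thesis
    unfolding Phi_def by (simp only: fst_conv snd_conv e1 e2 f)
qed



definition pairs :: "'a set \<Rightarrow> ('a \<Rightarrow> 'b) \<Rightarrow> ('a \<times> 'a) set" where
  "pairs X f = {(x, y). x \<in> X \<and> y \<in> X \<and> f x = f y}"

lemma fdeg_pairs:
  assumes fin: "finite X" and fX: "f ` X \<subseteq> X"
  shows "fdeg X X f = real (card (pairs X f)) / real (card X)"
proof -
  let ?F = "\<lambda>y. {x\<in>X. f x = y}"
  have eq: "pairs X f = (\<Union>y\<in>X. ?F y \<times> ?F y)"
    using fX by (auto simp: pairs_def)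
  have "card (pairs X f) = (\<Sum>y\<in>X. card (?F y \<times> ?F y))"
    unfolding eq by (rule card_UN_disjoint) (use fin in auto)
  also have "\<dots> = (\<Sum>y\<in>X. card (?F y) ^ 2)"
    by (simp add: card_cartesian_product power2_eq_square)
  finally have "real (card (pairs X f)) = (\<Sum>y\<in>X. real (card (?F y)) ^ 2)"
    by simp
  then show ?thesis by (simp add: fdeg_def)
qed

lemma pairs_prod:
  assumes bij: "bij_betw Phi X (Y \<times> Z)" and fX: "f ` X \<subseteq> X"
    and comm: "\<And>x. x \<in> X \<Longrightarrow> Phi (f x) = (g (fst (Phi x)), h (snd (Phi x)))"
  shows "card (pairs X f) = card (pairs Y g) * card (pairs Z h)"
proof -
  define tau where "tau = (\<lambda>(x, x'). ((fst (Phi x), fst (Phi x')), (snd (Phi x), snd (Phi x'))))"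
  have inj: "inj_on Phi X" using bij by (simp add: bij_betw_def)
  have img: "Phi ` X = Y \<times> Z" using bij by (simp add: bij_betw_def)
  have fe: "f x = f x' \<longleftrightarrow> Phi (f x) = Phi (f x')" if "x \<in> X" "x' \<in> X" for x x'
    using inj fX that by (auto dest: inj_onD)
  have "inj_on tau (pairs X f)"
  proof (rule inj_onI)
    fix p q assume p: "p \<in> pairs X f" and q: "q \<in> pairs X f" and e: "tau p = tau q"
    obtain x x' where px: "p = (x, x')" by (cases p)
    obtain y y' where qy: "q = (y, y')" by (cases q)
    have "Phi x = Phi y" "Phi x' = Phi y'" using e px qy by (auto simp: tau_def prod_eq_iff)
    then show "p = q" using p q px qy inj by (auto simp: pairs_def dest: inj_onD)
  qed
  moreover have "tau ` pairs X f = pairs Y g \<times> pairs Z h"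
  proof
    show "tau ` pairs X f \<subseteq> pairs Y g \<times> pairs Z h"
    proof (rule subsetI)
      fix q assume "q \<in> tau ` pairs X f"
      then obtain x x' where t: "q = tau (x, x')" and xp: "(x, x') \<in> pairs X f" by auto
      then have x: "x \<in> X" "x' \<in> X" and ff: "f x = f x'" by (auto simp: pairs_def)
      have "Phi x \<in> Y \<times> Z" "Phi x' \<in> Y \<times> Z" using img x by auto
      moreover have "Phi (f x) = Phi (f x')" using ff by simp
      ultimately show "q \<in> pairs Y g \<times> pairs Z h"
        using t comm[OF x(1)] comm[OF x(2)] by (auto simp: tau_def pairs_def mem_Times_iff)
    qed
  next
    show "pairs Y g \<times> pairs Z h \<subseteq> tau ` pairs X f"
    proof (rule subsetI)
      fix q assume "q \<in> pairs Y g \<times> pairs Z h"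
      then obtain p1 p2 where q: "q = (p1, p2)" and p1: "p1 \<in> pairs Y g" and p2: "p2 \<in> pairs Z h"
        by blast
      obtain y y' where yy: "p1 = (y, y')" by (cases p1)
      obtain z z' where zz: "p2 = (z, z')" by (cases p2)
      have 1: "(y, y') \<in> pairs Y g" and 2: "(z, z') \<in> pairs Z h" using p1 p2 yy zz by auto
      then have "(y, z) \<in> Phi ` X" "(y', z') \<in> Phi ` X" using img by (auto simp: pairs_def)
      then obtain x x' where x: "x \<in> X" "Phi x = (y, z)" and x': "x' \<in> X" "Phi x' = (y', z')"
        by (metis imageE)
      have "Phi (f x) = Phi (f x')" using comm[OF x(1)] comm[OF x'(1)] x x' 1 2
        by (simp add: pairs_def)
      then have "f x = f x'" using fe x x' by blast
      then have "(x, x') \<in> pairs X f" using x x' by (simp add: pairs_def)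
      moreover have "tau (x, x') = q" using x x' q yy zz by (simp add: tau_def)
      ultimately show "q \<in> tau ` pairs X f" by force
    qed
  qed
  ultimately have "card (pairs X f) = card (pairs Y g \<times> pairs Z h)"
    by (metis card_image)
  then show ?thesis by (simp add: card_cartesian_product)
qed

lemma bl_length: "x \<in> bl s m \<Longrightarrow> length x = s + m"
  using count_list_bool_length[of x] by (simp add: bl_def)

lemma finite_bl: "finite (bl s m)"
proof -
  have "bl s m \<subseteq> {x. set x \<subseteq> UNIV \<and> length x = s + m}" using bl_length by auto
  moreover have "finite {x::bool list. set x \<subseteq> UNIV \<and> length x = s + m}"
    by (rule finite_lists_length_eq) simp
  ultimately show ?thesis by (rule finite_subset)
qed

lemma cl_rep [simp]: "count_list (replicate n x) y = (if x = y then n else 0)"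
  by (induction n) auto

lemma bl_0: "bl 0 m = {replicate m True}"
proof (intro set_eqI iffI)
  fix x assume x: "x \<in> bl 0 m"
  then have "False \<notin> set x" by (simp add: bl_def count_list_0_iff)
  then have "y \<in> set x \<Longrightarrow> y = True" for y by (cases y) auto
  then have "x = replicate m True" using bl_length[OF x] by (intro replicate_eqI) auto
  then show "x \<in> {replicate m True}" by simp
qed (simp add: bl_def)

lemma bl_0': "bl s 0 = {replicate s False}"
proof (intro set_eqI iffI)
  fix x assume x: "x \<in> bl s 0"
  then have "True \<notin> set x" by (simp add: bl_def count_list_0_iff)
  then have "y \<in> set x \<Longrightarrow> y = False" for y by (cases y) auto
  then have "x = replicate s False" using bl_length[OF x] by (intro replicate_eqI) auto
  then show "x \<in> {replicate s False}" by simp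
qed (simp add: bl_def)

lemma Cons_False_bl [simp]: "False # v \<in> bl s m \<longleftrightarrow> (0 < s \<and> v \<in> bl (s - 1) m)"
  by (cases s) (auto simp: bl_def)

lemma Cons_True_bl [simp]: "True # v \<in> bl s m \<longleftrightarrow> (0 < m \<and> v \<in> bl s (m - 1))"
  by (cases m) (auto simp: bl_def)

lemma bl_SS: "bl (Suc s) (Suc m) = Cons False ` bl s (Suc m) \<union> Cons True ` bl (Suc s) m"
proof (intro set_eqI iffI)
  fix x assume x: "x \<in> bl (Suc s) (Suc m)"
  then have "x \<noteq> []" using bl_length[OF x] by auto
  then obtain b v where "x = b # v" by (cases x) auto
  then show "x \<in> Cons False ` bl s (Suc m) \<union> Cons True ` bl (Suc s) m"
    using x by (cases b) auto
qed auto

lemma card_bl: "card (bl s m) = (s + m) choose s"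
proof (induction s arbitrary: m)
  case 0
  then show ?case by (simp add: bl_0)
next
  case (Suc s)
  show ?case
  proof (induction m)
    case 0
    then show ?case by (simp add: bl_0')
  next
    case (Suc m)
    have "card (bl (Suc s) (Suc m)) = card (Cons False ` bl s (Suc m)) + card (Cons True ` bl (Suc s) m)"
      unfolding bl_SS by (rule card_Un_disjoint) (auto simp: finite_bl)
    also have "\<dots> = card (bl s (Suc m)) + card (bl (Suc s) m)"
      by (simp add: card_image)
    also have "\<dots> = (s + Suc m choose s) + (Suc s + m choose Suc s)"
      using Suc.IH \<open>\<And>m. card (bl s m) = (s + m) choose s\<close> by simp
    also have "\<dots> = Suc s + Suc m choose Suc s" by simp
    finally show ?case .
  qed
qed

lemma mset_bl: "mset x = mset y \<Longrightarrow> x \<in> bl s m \<longleftrightarrow> y \<in> bl s m"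
  by (simp add: bl_def flip: count_mset)

lemma bub_bl: "x \<in> bl s m \<Longrightarrow> bub x \<in> bl s m"
  using mset_bl[of "bub x" x] by simp

lemma bfix:
  assumes "v \<in> bl s m" "0 < m"
  shows "butlast (False # bub v) @ [True] = False # bub v"
proof -
  have "count_list v True \<noteq> 0" using assms by (simp add: bl_def)
  then have "True \<in> set v" using count_list_0_iff by metis
  then have "last (bub v) = True" by (rule last_bub_True)
  moreover have "bub v \<noteq> []" using \<open>True \<in> set v\<close> by (metis length_bub length_0_conv empty_iff list.set(1))
  ultimately have "last (False # bub v) = True" by simp
  then show ?thesis by (metis append_butlast_last_id list.distinct(1))
qed

definition PB :: "nat \<Rightarrow> nat \<Rightarrow> nat" where
  "PB s m = card (pairs (bl s m) bub)"

lemma PB_0: "PB 0 m = 1"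
proof -
  have "pairs (bl 0 m) bub = {(replicate m True, replicate m True)}"
    by (auto simp: pairs_def bl_0)
  then show ?thesis by (simp add: PB_def)
qed

lemma finite_pairs_bl: "finite (pairs (bl s m) bub)"
proof -
  have "pairs (bl s m) bub \<subseteq> bl s m \<times> bl s m" by (auto simp: pairs_def)
  then show ?thesis using finite_bl by (metis finite_SigmaI finite_subset)
qed

lemma PB_Suc:
  assumes m: "0 < m"
  shows "PB (Suc s) m = PB s m + card (bl (Suc s) (m - 1)) + card (bl s m) + card (bl s m)"
proof -
  define bf where "bf = (\<lambda>v. butlast (False # bub v))"
  define A where "A = (\<lambda>(v, v'). (False # v, False # v')) ` pairs (bl s m) bub"
  define B where "B = (\<lambda>v. (True # v, True # v)) ` bl (Suc s) (m - 1)"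
  define C where "C = (\<lambda>v. (False # v, True # bf v)) ` bl s m"
  define D where "D = (\<lambda>v. (True # bf v, False # v)) ` bl s m"
  have bfe: "bf v @ [True] = False # bub v" if "v \<in> bl s m" for v
    using bfix[OF that m] by (simp add: bf_def)
  have bfm: "True # bf v \<in> bl (Suc s) m" if "v \<in> bl s m" for v
  proof -
    have "mset (True # bf v) = mset (bf v @ [True])" by simp
    also have "\<dots> = mset (False # v)" using bfe[OF that] by simp
    finally show ?thesis using mset_bl[of "True # bf v" "False # v"] that by simp
  qed
  have eq: "pairs (bl (Suc s) m) bub = A \<union> B \<union> C \<union> D"
  proof (intro set_eqI iffI)
    fix p assume p: "p \<in> pairs (bl (Suc s) m) bub"
    then obtain x y where xy: "p = (x, y)" "x \<in> bl (Suc s) m" "y \<in> bl (Suc s) m" "bub x = bub y"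
      by (auto simp: pairs_def)
    have "x \<noteq> []" "y \<noteq> []" using bl_length[OF xy(2)] bl_length[OF xy(3)] by auto
    then obtain b v c v' where x: "x = b # v" and y: "y = c # v'"
      by (metis list.exhaust)
    show "p \<in> A \<union> B \<union> C \<union> D"
    proof (cases b; cases c)
      assume "b" "c"
      then have "v = v'" using xy x y by (simp add: bub_True)
      then show ?thesis using xy x y \<open>b\<close> \<open>c\<close> by (auto simp: B_def)
    next
      assume "b" "\<not> c"
      then have v: "v' \<in> bl s m" using xy x y by simp
      have "v @ [True] = False # bub v'" using xy x y \<open>b\<close> \<open>\<not> c\<close> by (simp add: bub_True bub_False)
      then have "v = bf v'" by (metis bf_def butlast_snoc)
      then show ?thesis using xy x y \<open>b\<close> \<open>\<not> c\<close> v by (auto simp: D_def)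
    next
      assume "\<not> b" "c"
      then have v: "v \<in> bl s m" using xy x y by simp
      have "v' @ [True] = False # bub v" using xy x y \<open>\<not> b\<close> \<open>c\<close> by (simp add: bub_True bub_False)
      then have "v' = bf v" by (metis bf_def butlast_snoc)
      then show ?thesis using xy x y \<open>\<not> b\<close> \<open>c\<close> v by (auto simp: C_def)
    next
      assume "\<not> b" "\<not> c"
      then have "(v, v') \<in> pairs (bl s m) bub" using xy x y by (simp add: bub_False pairs_def)
      then show ?thesis using xy x y \<open>\<not> b\<close> \<open>\<not> c\<close> unfolding A_def by force
    qed
  next
    fix p assume "p \<in> A \<union> B \<union> C \<union> D"
    then show "p \<in> pairs (bl (Suc s) m) bub"
    proof (elim UnE)
      assume "p \<in> A" then show ?thesis
        by (auto simp: A_def pairs_def bub_False)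
    next
      assume "p \<in> B" then show ?thesis using m
        by (auto simp: B_def pairs_def)
    next
      assume "p \<in> C"
      then obtain v where v: "v \<in> bl s m" "p = (False # v, True # bf v)" by (auto simp: C_def)
      then show ?thesis using bfm[OF v(1)] bfe[OF v(1)] by (simp add: pairs_def bub_True bub_False)
    next
      assume "p \<in> D"
      then obtain v where v: "v \<in> bl s m" "p = (True # bf v, False # v)" by (auto simp: D_def)
      then show ?thesis using bfm[OF v(1)] bfe[OF v(1)] by (simp add: pairs_def bub_True bub_False)
    qed
  qed
  have fA: "finite A" using finite_pairs_bl by (simp add: A_def)
  have fB: "finite B" using finite_bl by (simp add: B_def)
  have fC: "finite C" using finite_bl by (simp add: C_def)
  have fD: "finite D" using finite_bl by (simp add: D_def)
  have cA: "card A = PB s m"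
    unfolding A_def PB_def by (rule card_image) (auto simp: inj_on_def)
  have cB: "card B = card (bl (Suc s) (m - 1))"
    unfolding B_def by (rule card_image) (auto simp: inj_on_def)
  have cC: "card C = card (bl s m)"
    unfolding C_def by (rule card_image) (auto simp: inj_on_def)
  have cD: "card D = card (bl s m)"
    unfolding D_def by (rule card_image) (auto simp: inj_on_def)
  have "card (A \<union> B \<union> C \<union> D) = card A + card B + card C + card D"
    using fA fB fC fD
    by (subst card_Un_disjoint; (auto simp: A_def B_def C_def D_def)?)+
  moreover have "PB (Suc s) m = card (A \<union> B \<union> C \<union> D)" by (simp add: PB_def eq)
  ultimately show ?thesis using cA cB cC cD by simp
qed



lemma PB_closed: "PB (Suc s) (Suc k) = (Suc s + Suc k choose Suc s) + 2 * (Suc s + Suc k choose s)"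
proof (induction s)
  case 0
  then show ?case by (simp add: PB_Suc PB_0 card_bl)
next
  case (Suc s)
  then show ?case by (simp add: PB_Suc card_bl)
qed

lemma PB_ratio:
  assumes "0 < m"
  shows "real (PB s m) = real (card (bl s m)) * (2 * real s / (real m + 1) + 1)"
proof (cases s)
  case 0
  then show ?thesis by (simp add: PB_0 card_bl)
next
  case (Suc s')
  obtain k where k: "m = Suc k" using assms by (cases m) auto
  define c where "c = (Suc (s' + Suc k) choose Suc s')"
  define d where "d = (Suc (s' + Suc k) choose s')"
  have cd: "Suc s' * c = Suc (Suc k) * d"
    unfolding c_def d_def by (rule Suc_times_binomial_add)
  then have cdr: "real (Suc s') * real c = (real k + 2) * real d"
    by (metis of_nat_mult of_nat_Suc add_2_eq_Suc' of_nat_add of_nat_numeral)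
  have "PB s m = c + 2 * d" using PB_closed[of s' k] Suc k by (simp add: c_def d_def)
  moreover have "card (bl s m) = c" using Suc k by (simp add: card_bl c_def)
  ultimately show ?thesis using Suc k cdr
    by (simp add: field_simps)
qed

lemma W_nil: "W [] = {[]}"
  by (auto simp: W_def)

lemma W_props: "finite (W a) \<and> 0 < card (W a)"
proof (induction a)
  case Nil
  then show ?case by (simp add: W_nil)
next
  case (Cons s a)
  have b: "bij_betw Phi (W (s # a)) (bl s (sum_list a) \<times> W a)" by (rule bij_Phi)
  have "finite (bl s (sum_list a) \<times> W a)" using Cons finite_bl by simp
  moreover have "card (bl s (sum_list a) \<times> W a) > 0"
    using Cons finite_bl by (simp add: card_cartesian_product card_bl)
  ultimately show ?case using bij_betw_finite[OF b] bij_betw_same_card[OF b] by simp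
qed

lemma bub_W: "bub ` W a \<subseteq> W a"
  by (auto simp: W_def)

lemma alg_aux: "(c::real) > 0 \<Longrightarrow> c * r * y / (c * z) = r * (y / z)"
  by simp

lemma D_cons:
  assumes "0 < sum_list a"
  shows "fdeg (W (s # a)) (W (s # a)) bub
       = (2 * real s / (real (sum_list a) + 1) + 1) * fdeg (W a) (W a) bub"
proof -
  have b: "bij_betw Phi (W (s # a)) (bl s (sum_list a) \<times> W a)" by (rule bij_Phi)
  have cp: "card (pairs (W (s # a)) bub) = PB s (sum_list a) * card (pairs (W a) bub)"
    unfolding PB_def by (rule pairs_prod[OF b bub_W Phi_bub])
  have cw: "card (W (s # a)) = card (bl s (sum_list a)) * card (W a)"
    using bij_betw_same_card[OF b] by (simp add: card_cartesian_product)
  have pos: "0 < card (bl s (sum_list a))" by (simp add: card_bl)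
  have pos2: "0 < card (W a)" using W_props by blast
  show ?thesis
    unfolding fdeg_pairs[OF conjunct1[OF W_props] bub_W] cp cw of_nat_mult PB_ratio[OF assms]
  proof -
    have p1: "real (card (bl s (sum_list a))) > 0" using pos by simp
    have p2: "real (card (W a)) > 0" using pos2 by simp
    have p3: "real (sum_list a) + 1 \<noteq> 0" by (simp add: add_pos_nonneg)
    show "real (card (bl s (sum_list a))) * (2 * real s / (real (sum_list a) + 1) + 1) *
          real (card (pairs (W a) bub)) / (real (card (bl s (sum_list a))) * real (card (W a))) =
          (2 * real s / (real (sum_list a) + 1) + 1) * (real (card (pairs (W a) bub)) / real (card (W a)))"
      using p1 p2 by (simp add: alg_aux)
  qed
qed

lemma D_single: "fdeg (W [s]) (W [s]) bub = 1"
proof -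
  have "pairs (W [s]) bub = {(replicate s 1, replicate s 1)}"
    by (auto simp: pairs_def W_single)
  moreover have "fdeg (W [s]) (W [s]) bub = real (card (pairs (W [s]) bub)) / real (card (W [s]))"
    by (rule fdeg_pairs[OF conjunct1[OF W_props] bub_W])
  ultimately show ?thesis by (simp add: W_single)
qed

definition Fp :: "nat list \<Rightarrow> real" where
  "Fp a = (\<Prod>j=1..length a - 1.
       2 * real (a ! (j - 1)) / (real (\<Sum>k=j+1..length a. a ! (k - 1)) + 1) + 1)"

lemma inner_shift: "(\<Sum>k=Suc j+1..Suc L. (s # a) ! (k - 1)) = (\<Sum>k=j+1..L. a ! (k - 1))"
proof -
  have "(\<Sum>k=Suc j+1..Suc L. (s # a) ! (k - 1)) = (\<Sum>k=Suc (j+1)..Suc L. (s # a) ! (k - 1))"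
    by simp
  also have "\<dots> = (\<Sum>k=j+1..L. (s # a) ! (Suc k - 1))"
    by (rule sum.shift_bounds_cl_Suc_ivl)
  also have "\<dots> = (\<Sum>k=j+1..L. a ! (k - 1))"
  proof (rule sum.cong)
    fix k assume "k \<in> {j+1..L}"
    then obtain k' where "k = Suc k'" by (cases k) auto
    then show "(s # a) ! (Suc k - 1) = a ! (k - 1)" by simp
  qed simp
  finally show ?thesis .
qed

lemma sum_nth1: "(\<Sum>k=1..length l. l ! (k - 1)) = sum_list l"
proof -
  have "(\<Sum>k=Suc 0..Suc (length l - 1). l ! (k - 1)) = (\<Sum>k=0..length l - 1. l ! k)"
    by (subst sum.shift_bounds_cl_Suc_ivl) simp
  moreover have "(\<Sum>k=0..length l - 1. l ! k) = (\<Sum>k=0..<length l. l ! k)" if "l \<noteq> []"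
    using that by (intro sum.cong) (cases l; auto)+
  ultimately show ?thesis
    by (cases "l = []") (simp_all add: sum_list_sum_nth)
qed

lemma Fp_cons:
  assumes "a \<noteq> []"
  shows "Fp (s # a) = (2 * real s / (real (sum_list a) + 1) + 1) * Fp a"
proof -
  define L where "L = length a"
  have L: "1 \<le> L" using assms by (simp add: L_def Suc_le_eq)
  define t where "t = (\<lambda>j. 2 * real ((s # a) ! (j - 1)) /
      (real (\<Sum>k=j+1..length (s # a). (s # a) ! (k - 1)) + 1) + 1)"
  have "Fp (s # a) = prod t {1..L}" unfolding Fp_def t_def L_def by (simp only: length_Cons diff_Suc_1)
  also have "\<dots> = t 1 * prod t {Suc 1..L}" using L by (rule prod.atLeast_Suc_atMost)
  also have "prod t {Suc 1..L} = prod t {Suc 1..Suc (L - 1)}" using L by simp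
  also have "\<dots> = prod (\<lambda>j. t (Suc j)) {1..L - 1}" by (rule prod.shift_bounds_cl_Suc_ivl)
  also have "\<dots> = Fp a"
    unfolding Fp_def L_def[symmetric]
  proof (rule prod.cong)
    fix j assume "j \<in> {1..L - 1}"
    then obtain j' where j': "j = Suc j'" by (cases j) auto
    show "t (Suc j) = 2 * real (a ! (j - 1)) / (real (\<Sum>k=j+1..L. a ! (k - 1)) + 1) + 1"
      unfolding t_def using inner_shift[where j=j and L=L and s=s and a=a] j' by (simp add: L_def)
  qed simp
  also have "t 1 = 2 * real s / (real (sum_list a) + 1) + 1"
  proof -
    have "(\<Sum>k=1+1..length (s # a). (s # a) ! (k - 1)) = (\<Sum>k=0+1..L. a ! (k - 1))"
      using inner_shift[where j=0 and L=L and s=s and a=a] by (simp add: L_def)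
    also have "\<dots> = sum_list a" using sum_nth1[of a] by (simp add: L_def)
    finally have e: "(\<Sum>k=1+1..length (s # a). (s # a) ! (k - 1)) = sum_list a" .
    have "t 1 = 2 * real ((s # a) ! (1 - 1)) / (real (\<Sum>k=1+1..length (s # a). (s # a) ! (k - 1)) + 1) + 1"
      unfolding t_def by (rule refl)
    then show ?thesis by (simp only: e) simp
  qed
  finally show ?thesis .
qed

lemma main_W:
  assumes "\<forall>i<length a. 0 < a ! i" "a \<noteq> []"
  shows "fdeg (W a) (W a) bub = Fp a"
  using assms
proof (induction a)
  case Nil
  then show ?case by simp
next
  case (Cons s a)
  show ?case
  proof (cases "a = []")
    case True
    then show ?thesis by (simp add: D_single Fp_def)
  next
    case False
    have pos: "\<forall>i<length a. 0 < a ! i" using Cons.prems(1) by auto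
    have "0 < a ! 0" using pos False by auto
    then have "0 < sum_list a" using False
      by (metis gr0I nth_mem sum_list_eq_0_iff length_greater_0_conv)
    then show ?thesis
      using D_cons Cons.IH[OF pos False] Fp_cons[OF False] by simp
  qed
qed


theorem mainTheorem9:
  fixes a :: "nat list"
  assumes "length a \<ge> 2"
    and "\<forall>i<length a. a ! i > 0"
  shows "fdeg (words a) (words a) bubble =
    (\<Prod>j=1..length a - 1.
       2 * real (a ! (j - 1)) / (real (\<Sum>k=j+1..length a. a ! (k - 1)) + 1) + 1)"
proof -
  have b: "bubble = bub" by (rule ext) (rule bubble_bub)
  have ne: "a \<noteq> []" using assms(1) by auto
  have "fdeg (W a) (W a) bub = Fp a" using main_W[OF assms(2) ne] .
  then show ?thesis unfolding b words_W Fp_def .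
qed

end
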